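(* If for some $T_0>0$ the family $Z^\varepsilon(T_0)=\varepsilon Z(T_0/\varepsilon)$ satisfies the weak large deviation principle in $\mathbb R^d$ with rate function $I_{T_0}$, then for every $T>0$ the family $Z^\varepsilon(T)$ satisfies the weak large deviation principle in $\mathbb R^d$, and the rate functions satisfy \[I_{\theta T}(\theta q,\theta q')=\theta\,I_T(q,q')\quad\text{for all }\theta>0,\ T>0,\ q,q'\in\mathbb R^d,\] and \[I_{T+T'}(q,q'')\le I_T(q,q')+I_{T'}(q',q'')\quad\text{for all }T,T'>0,\ q,q',q''\in\mathbb R^d.\]
   Context: Let $E\subset\mathbb R^d$ be unbounded and $(Z(t))_{t\ge0}$ a continuous-time strong Markov process on $E$ with right-continuous paths having left limits; $\mathbb P_z$ denotes probability given $Z(0)=z$. For $\varepsilon>0$, $Z^\varepsilon(t)=\varepsilon Z(t/\varepsilon)$. Weak LDP: for $T>0$, the family $Z^\varepsilon(T)$ satisfies the weak large deviation principle with rate function $I_T:\mathbb R^d\times\mathbb R^d\to[0,\infty]$ if $I_T$ is lower semicontinuous; for every $q\in\mathbb R^d$ and open $O\subset\mathbb R^d$, $\lim_{\delta\to0}\liminf_{\varepsilon\to0}\varepsilon\log\inf_{z\in E:|\varepsilon z-q|<\delta}\mathbb P_z(Z^\varepsilon(T)\in O)\ge-\inf_{q'\in O}I_T(q,q')$; and for every $q\in\mathbb R^d$ and compact $V\subset\mathbb R^d$, $\lim_{\delta\to0}\limsup_{\varepsilon\to0}\varepsilon\log\sup_{z\in E:|\varepsilon z-q|<\delta}\mathbb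 P_z(Z^\varepsilon(T)\in V)\le-\inf_{q'\in V}I_T(q,q')$. *)

theory Defs
  imports "HOL-Probability.Probability"
begin

text \<open>Extended logarithm on [0,\<infinity>]: log 0 = -\<infinity> (and -\<infinity> for nonpositive arguments,
  which only arises from the empty supremum), log \<infinity> = \<infinity> (only from the empty infimum).\<close>
definition elog :: "ereal \<Rightarrow> ereal" where
  "elog x = (if x \<le> 0 then -\<infinity> else if x = \<infinity> then \<infinity> else ereal (ln (real_of_ereal x)))"

definition lower_semicont :: "('b::topological_space \<Rightarrow> ereal) \<Rightarrow> bool" where
  "lower_semicont f \<longleftrightarrow> (\<forall>x c. c < f x \<longrightarrow> eventually (\<lambda>y. c < f y) (nhds x))"

definition nat_filt :: "'w measure \<Rightarrow> (real \<Rightarrow> 'w \<Rightarrow> 'a::topological_space) \<Rightarrow> real \<Rightarrow> 'w set set" where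
  "nat_filt \<Omega> Z s = sigma_sets (space \<Omega>)
     (\<Union>r\<in>{0..s}. {Z r -` B \<inter> space \<Omega> | B. B \<in> sets borel})"

definition markov_process ::
  "'a::euclidean_space set \<Rightarrow> 'w measure \<Rightarrow> ('a \<Rightarrow> 'w measure) \<Rightarrow> (real \<Rightarrow> 'w \<Rightarrow> 'a) \<Rightarrow> bool" where
  "markov_process E \<Omega> P Z \<longleftrightarrow>
     (\<forall>z\<in>E. prob_space (P z) \<and> sets (P z) = sets \<Omega>) \<and>
     (\<forall>t\<ge>0. Z t \<in> measurable \<Omega> borel) \<and>
     (\<forall>\<omega>\<in>space \<Omega>. \<forall>t\<ge>0. Z t \<omega> \<in> E) \<and>
     (\<forall>z\<in>E. AE \<omega> in P z. Z 0 \<omega> = z) \<and>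
     (\<forall>\<omega>\<in>space \<Omega>. \<forall>t\<ge>0. continuous (at_right t) (\<lambda>s. Z s \<omega>) \<and>
        (t > 0 \<longrightarrow> (\<exists>l. ((\<lambda>s. Z s \<omega>) \<longlongrightarrow> l) (at_left t)))) \<and>
     (\<forall>t\<ge>0. \<forall>A\<in>sets borel.
        (\<lambda>z. measure (P z) {\<omega>\<in>space \<Omega>. Z t \<omega> \<in> A}) \<in> borel_measurable (restrict_space borel E)) \<and>
     (\<forall>z\<in>E. \<forall>s\<ge>0. \<forall>t\<ge>0. \<forall>A\<in>sets borel. \<forall>F\<in>nat_filt \<Omega> Z s.
        measure (P z) (F \<inter> {\<omega>\<in>space \<Omega>. Z (s + t) \<omega> \<in> A}) =
        (\<integral>\<omega>. indicator F \<omega> * measure (P (Z s \<omega>)) {\<omega>'\<in>space \<Omega>. Z t \<omega>' \<in> A} \<partial>P z))"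

definition scaled_prob ::
  "'w measure \<Rightarrow> ('a::euclidean_space \<Rightarrow> 'w measure) \<Rightarrow> (real \<Rightarrow> 'w \<Rightarrow> 'a) \<Rightarrow> real \<Rightarrow> real \<Rightarrow> 'a \<Rightarrow> 'a set \<Rightarrow> real" where
  "scaled_prob \<Omega> P Z T \<epsilon> z S = measure (P z) {\<omega>\<in>space \<Omega>. \<epsilon> *\<^sub>R Z (T / \<epsilon>) \<omega> \<in> S}"

text \<open>Weak large deviation principle for Z^eps(T) with rate function I (uniform in the starting
  point z with eps z near q). Infimum over the empty set is +\<infinity>, supremum over the empty set is -\<infinity>.\<close>
definition weak_LDP ::
  "'a::euclidean_space set \<Rightarrow> 'w measure \<Rightarrow> ('a \<Rightarrow> 'w measure) \<Rightarrow> (real \<Rightarrow> 'w \<Rightarrow> 'a) \<Rightarrow> real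
     \<Rightarrow> ('a \<Rightarrow> 'a \<Rightarrow> ereal) \<Rightarrow> bool" where
  "weak_LDP E \<Omega> P Z T I \<longleftrightarrow>
     (\<forall>q q'. 0 \<le> I q q') \<and>
     lower_semicont (\<lambda>(q, q'). I q q') \<and>
     (\<forall>q U. open U \<longrightarrow>
        (\<exists>L. ((\<lambda>\<delta>. Liminf (at_right 0) (\<lambda>\<epsilon>. ereal \<epsilon> *
              elog (INF z\<in>{z\<in>E. dist (\<epsilon> *\<^sub>R z) q < \<delta>}. ereal (scaled_prob \<Omega> P Z T \<epsilon> z U))))
             \<longlongrightarrow> L) (at_right 0) \<and>
           - (INF q'\<in>U. I q q') \<le> L)) \<and>
     (\<forall>q V. compact V \<longrightarrow>
        (\<exists>L. ((\<lambda>\<delta>. Limsup (at_right 0) (\<lambda>\<epsilon>. ereal \<epsilon> *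
              elog (SUP z\<in>{z\<in>E. dist (\<epsilon> *\<^sub>R z) q < \<delta>}. ereal (scaled_prob \<Omega> P Z T \<epsilon> z V))))
             \<longlongrightarrow> L) (at_right 0) \<and>
           L \<le> - (INF q'\<in>V. I q q')))"

end

theory Submission
  imports Defs
begin


lemma Liminf_rescale:
  fixes h :: "real \<Rightarrow> 'b::complete_linorder"
  assumes "\<theta> > 0"
  shows "Liminf (at_right 0) (\<lambda>\<epsilon>. h (\<epsilon> / \<theta>)) = Liminf (at_right 0) h"
proof -
  have "Liminf (at_right 0) (\<lambda>\<epsilon>. h (\<epsilon> / \<theta>)) = Liminf (at_right 0) (\<lambda>\<epsilon>. h (times (1/\<theta>) \<epsilon>))"
    by simp
  also have "\<dots> = Liminf (filtermap (times (1/\<theta>)) (at_right 0)) h"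
    by (rule Liminf_filtermap_eq[symmetric]) (use assms in \<open>auto simp: inj_def\<close>)
  also have "filtermap (times (1/\<theta>)) (at_right 0) = at_right (0::real)"
    using filtermap_times_pos_at_right[of "1/\<theta>" 0] assms by simp
  finally show ?thesis .
qed

lemma Limsup_rescale:
  fixes h :: "real \<Rightarrow> 'b::complete_linorder"
  assumes "\<theta> > 0"
  shows "Limsup (at_right 0) (\<lambda>\<epsilon>. h (\<epsilon> / \<theta>)) = Limsup (at_right 0) h"
proof -
  have "Limsup (at_right 0) (\<lambda>\<epsilon>. h (\<epsilon> / \<theta>)) = Limsup (at_right 0) (\<lambda>\<epsilon>. h (times (1/\<theta>) \<epsilon>))"
    by simp
  also have "\<dots> = Limsup (filtermap (times (1/\<theta>)) (at_right 0)) h"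
    by (rule Limsup_filtermap_eq[symmetric]) (use assms in \<open>auto simp: inj_def\<close>)
  also have "filtermap (times (1/\<theta>)) (at_right 0) = at_right (0::real)"
    using filtermap_times_pos_at_right[of "1/\<theta>" 0] assms by simp
  finally show ?thesis .
qed

lemma filterlim_rescale:
  assumes "\<theta> > 0"
  shows "filterlim (\<lambda>x::real. x / \<theta>) (at_right 0) (at_right 0)"
proof -
  have "filtermap (times (1/\<theta>)) (at_right 0) = at_right (0::real)"
    using filtermap_times_pos_at_right[of "1/\<theta>" 0] assms by simp
  moreover have "times (1/\<theta>) = (\<lambda>x::real. x / \<theta>)" by auto
  ultimately show ?thesis by (simp add: filterlim_def)
qed

lemma ereal_cmult_less_iff:
  assumes "c > 0" shows "ereal c * a < ereal c * b \<longleftrightarrow> a < b"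
  using assms by (cases a; cases b) auto

lemma ereal_cmult_le_iff:
  assumes "c > 0" shows "ereal c * a \<le> ereal c * b \<longleftrightarrow> a \<le> b"
  using assms by (cases a; cases b) auto

lemma ereal_cmult_inv:
  assumes "c > 0" shows "ereal c * (ereal (1/c) * a) = a"
  using assms by (cases a) auto

lemma INF_ereal_cmult:
  assumes "c > 0"
  shows "(INF x\<in>A. ereal c * f x) = ereal c * (INF x\<in>A. f x)"
proof (rule antisym)
  let ?g = "INF x\<in>A. ereal c * f x"
  have "ereal (1/c) * ?g \<le> f x" if "x \<in> A" for x
  proof -
    have "?g \<le> ereal c * f x" using that by (rule INF_lower)
    then have "ereal (1/c) * ?g \<le> ereal (1/c) * (ereal c * f x)"
      using assms by (subst ereal_cmult_le_iff) auto
    also have "\<dots> = f x" using assms by (cases "f x") auto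
    finally show ?thesis .
  qed
  then have "ereal (1/c) * ?g \<le> (INF x\<in>A. f x)" by (rule INF_greatest)
  then have "ereal c * (ereal (1/c) * ?g) \<le> ereal c * (INF x\<in>A. f x)"
    using assms by (subst ereal_cmult_le_iff) auto
  then show "?g \<le> ereal c * (INF x\<in>A. f x)" using ereal_cmult_inv[OF assms] by simp
next
  show "ereal c * (INF x\<in>A. f x) \<le> (INF x\<in>A. ereal c * f x)"
    using assms by (intro INF_greatest) (subst ereal_cmult_le_iff, auto intro: INF_lower)
qed

lemma lsc_compose:
  assumes "lower_semicont f" "\<And>x. isCont g x"
  shows "lower_semicont (\<lambda>x. f (g x))"
  unfolding lower_semicont_def
proof (intro allI impI)
  fix x c assume "c < f (g x)"
  then have ev: "eventually (\<lambda>y. c < f y) (nhds (g x))" using assms(1) unfolding lower_semicont_def by blast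
  have "filterlim g (nhds (g x)) (nhds x)" using assms(2)[of x] by (simp add: isCont_def continuous_at tendsto_at_iff_tendsto_nhds)
  from this[unfolded filterlim_iff, rule_format, OF ev]
  show "eventually (\<lambda>y. c < f (g y)) (nhds x)" .
qed

definition lowf where
  "lowf E \<Omega> P Z T q U \<delta> = Liminf (at_right 0) (\<lambda>\<epsilon>. ereal \<epsilon> *
              elog (INF z\<in>{z\<in>E. dist (\<epsilon> *\<^sub>R z) q < \<delta>}. ereal (scaled_prob \<Omega> P Z T \<epsilon> z U)))"

definition upf where
  "upf E \<Omega> P Z T q V \<delta> = Limsup (at_right 0) (\<lambda>\<epsilon>. ereal \<epsilon> *
              elog (SUP z\<in>{z\<in>E. dist (\<epsilon> *\<^sub>R z) q < \<delta>}. ereal (scaled_prob \<Omega> P Z T \<epsilon> z V)))"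

lemma weak_LDP_alt:
  "weak_LDP E \<Omega> P Z T I \<longleftrightarrow>
     (\<forall>q q'. 0 \<le> I q q') \<and>
     lower_semicont (\<lambda>(q, q'). I q q') \<and>
     (\<forall>q U. open U \<longrightarrow> (\<exists>L. ((\<lambda>\<delta>. lowf E \<Omega> P Z T q U \<delta>) \<longlongrightarrow> L) (at_right 0) \<and> - (INF q'\<in>U. I q q') \<le> L)) \<and>
     (\<forall>q V. compact V \<longrightarrow> (\<exists>L. ((\<lambda>\<delta>. upf E \<Omega> P Z T q V \<delta>) \<longlongrightarrow> L) (at_right 0) \<and> L \<le> - (INF q'\<in>V. I q q')))"
  unfolding weak_LDP_def lowf_def upf_def by simp

lemma scaled_prob_scale:
  fixes U :: "'a::euclidean_space set"
  assumes "\<theta> > 0" "\<epsilon> > 0"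
  shows "scaled_prob \<Omega> P Z (\<theta>*T) \<epsilon> z U = scaled_prob \<Omega> P Z T (\<epsilon>/\<theta>) z ((\<lambda>x. (1/\<theta>) *\<^sub>R x) ` U)"
proof -
  have 1: "\<theta>*T/\<epsilon> = T/(\<epsilon>/\<theta>)" using assms by (simp add: field_simps)
  have 2: "(\<epsilon> *\<^sub>R x \<in> U) \<longleftrightarrow> ((\<epsilon>/\<theta>) *\<^sub>R x \<in> (\<lambda>x. (1/\<theta>) *\<^sub>R x) ` U)" for x
  proof
    assume "\<epsilon> *\<^sub>R x \<in> U" then show "(\<epsilon>/\<theta>) *\<^sub>R x \<in> (\<lambda>x. (1/\<theta>) *\<^sub>R x) ` U"
      using assms by (intro image_eqI[of _ _ "\<epsilon> *\<^sub>R x"]) auto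
  next
    assume "(\<epsilon>/\<theta>) *\<^sub>R x \<in> (\<lambda>x. (1/\<theta>) *\<^sub>R x) ` U"
    then obtain u where u: "u \<in> U" "(\<epsilon>/\<theta>) *\<^sub>R x = (1/\<theta>) *\<^sub>R u" by auto
    have "u = \<theta> *\<^sub>R ((1/\<theta>) *\<^sub>R u)" using assms by simp
    also have "\<dots> = \<theta> *\<^sub>R ((\<epsilon>/\<theta>) *\<^sub>R x)" using u by simp
    also have "\<dots> = \<epsilon> *\<^sub>R x" using assms by simp
    finally show "\<epsilon> *\<^sub>R x \<in> U" using u by simp
  qed
  show ?thesis unfolding scaled_prob_def 1 2 ..
qed

lemma dist_scale:
  fixes z q :: "'a::euclidean_space"
  assumes "\<theta> > 0"
  shows "dist (\<epsilon> *\<^sub>R z) q < \<delta> \<longleftrightarrow> dist ((\<epsilon>/\<theta>) *\<^sub>R z) ((1/\<theta>) *\<^sub>R q) < \<delta>/\<theta>"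
proof -
  have "(\<epsilon>/\<theta>) *\<^sub>R z - (1/\<theta>) *\<^sub>R q = (1/\<theta>) *\<^sub>R (\<epsilon> *\<^sub>R z - q)"
    by (simp add: algebra_simps)
  then have "dist ((\<epsilon>/\<theta>) *\<^sub>R z) ((1/\<theta>) *\<^sub>R q) = dist (\<epsilon> *\<^sub>R z) q / \<theta>"
    using assms by (simp add: dist_norm)
  then show ?thesis using assms by (simp add: divide_less_cancel)
qed

lemma lowf_scale:
  fixes q :: "'a::euclidean_space"
  assumes "\<theta> > 0"
  shows "lowf E \<Omega> P Z (\<theta>*T) q U \<delta> = ereal \<theta> * lowf E \<Omega> P Z T ((1/\<theta>) *\<^sub>R q) ((\<lambda>x. (1/\<theta>) *\<^sub>R x) ` U) (\<delta>/\<theta>)"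
proof -
  define G where "G \<epsilon> = elog (INF z\<in>{z\<in>E. dist (\<epsilon> *\<^sub>R z) ((1/\<theta>) *\<^sub>R q) < \<delta>/\<theta>}. ereal (scaled_prob \<Omega> P Z T \<epsilon> z ((\<lambda>x. (1/\<theta>) *\<^sub>R x) ` U)))" for \<epsilon>
  have key: "ereal \<epsilon> * elog (INF z\<in>{z\<in>E. dist (\<epsilon> *\<^sub>R z) q < \<delta>}. ereal (scaled_prob \<Omega> P Z (\<theta>*T) \<epsilon> z U))
     = ereal \<theta> * (ereal (\<epsilon>/\<theta>) * G (\<epsilon>/\<theta>))" if "\<epsilon> > 0" for \<epsilon>
  proof -
    have "ereal \<epsilon> * elog (INF z\<in>{z\<in>E. dist (\<epsilon> *\<^sub>R z) q < \<delta>}. ereal (scaled_prob \<Omega> P Z (\<theta>*T) \<epsilon> z U))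
       = ereal \<epsilon> * G (\<epsilon>/\<theta>)"
    proof -
      have "{z\<in>E. dist (\<epsilon> *\<^sub>R z) q < \<delta>} = {z\<in>E. dist ((\<epsilon>/\<theta>) *\<^sub>R z) ((1/\<theta>) *\<^sub>R q) < \<delta>/\<theta>}"
        using dist_scale[OF assms, of \<epsilon> _ q \<delta>] by blast
      then show ?thesis unfolding G_def scaled_prob_scale[OF assms that] by simp
    qed
    also have "\<dots> = ereal \<theta> * (ereal (\<epsilon>/\<theta>) * G (\<epsilon>/\<theta>))"
      using assms by (subst mult.assoc[symmetric]) simp
    finally show ?thesis .
  qed
  have "lowf E \<Omega> P Z (\<theta>*T) q U \<delta> = Liminf (at_right 0) (\<lambda>\<epsilon>. ereal \<theta> * (ereal (\<epsilon>/\<theta>) * G (\<epsilon>/\<theta>)))"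
    unfolding lowf_def by (rule Liminf_eq) (auto intro: eventually_mono[OF eventually_at_right_less] key)
  also have "\<dots> = ereal \<theta> * Liminf (at_right 0) (\<lambda>\<epsilon>. ereal (\<epsilon>/\<theta>) * G (\<epsilon>/\<theta>))"
    using assms by (intro Liminf_ereal_mult_left) auto
  also have "Liminf (at_right 0) (\<lambda>\<epsilon>. ereal (\<epsilon>/\<theta>) * G (\<epsilon>/\<theta>)) = Liminf (at_right 0) (\<lambda>\<epsilon>. ereal \<epsilon> * G \<epsilon>)"
    using Liminf_rescale[OF assms, of "\<lambda>\<epsilon>. ereal \<epsilon> * G \<epsilon>"] by simp
  finally show ?thesis unfolding lowf_def G_def .
qed

lemma upf_scale:
  fixes q :: "'a::euclidean_space"
  assumes "\<theta> > 0"
  shows "upf E \<Omega> P Z (\<theta>*T) q U \<delta> = ereal \<theta> * upf E \<Omega> P Z T ((1/\<theta>) *\<^sub>R q) ((\<lambda>x. (1/\<theta>) *\<^sub>R x) ` U) (\<delta>/\<theta>)"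
proof -
  define G where "G \<epsilon> = elog (SUP z\<in>{z\<in>E. dist (\<epsilon> *\<^sub>R z) ((1/\<theta>) *\<^sub>R q) < \<delta>/\<theta>}. ereal (scaled_prob \<Omega> P Z T \<epsilon> z ((\<lambda>x. (1/\<theta>) *\<^sub>R x) ` U)))" for \<epsilon>
  have key: "ereal \<epsilon> * elog (SUP z\<in>{z\<in>E. dist (\<epsilon> *\<^sub>R z) q < \<delta>}. ereal (scaled_prob \<Omega> P Z (\<theta>*T) \<epsilon> z U))
     = ereal \<theta> * (ereal (\<epsilon>/\<theta>) * G (\<epsilon>/\<theta>))" if "\<epsilon> > 0" for \<epsilon>
  proof -
    have "ereal \<epsilon> * elog (SUP z\<in>{z\<in>E. dist (\<epsilon> *\<^sub>R z) q < \<delta>}. ereal (scaled_prob \<Omega> P Z (\<theta>*T) \<epsilon> z U))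
       = ereal \<epsilon> * G (\<epsilon>/\<theta>)"
    proof -
      have "{z\<in>E. dist (\<epsilon> *\<^sub>R z) q < \<delta>} = {z\<in>E. dist ((\<epsilon>/\<theta>) *\<^sub>R z) ((1/\<theta>) *\<^sub>R q) < \<delta>/\<theta>}"
        using dist_scale[OF assms, of \<epsilon> _ q \<delta>] by blast
      then show ?thesis unfolding G_def scaled_prob_scale[OF assms that] by simp
    qed
    also have "\<dots> = ereal \<theta> * (ereal (\<epsilon>/\<theta>) * G (\<epsilon>/\<theta>))"
      using assms by (subst mult.assoc[symmetric]) simp
    finally show ?thesis .
  qed
  have "upf E \<Omega> P Z (\<theta>*T) q U \<delta> = Limsup (at_right 0) (\<lambda>\<epsilon>. ereal \<theta> * (ereal (\<epsilon>/\<theta>) * G (\<epsilon>/\<theta>)))"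
    unfolding upf_def by (rule Limsup_eq) (auto intro: eventually_mono[OF eventually_at_right_less] key)
  also have "\<dots> = ereal \<theta> * Limsup (at_right 0) (\<lambda>\<epsilon>. ereal (\<epsilon>/\<theta>) * G (\<epsilon>/\<theta>))"
    using assms by (intro Limsup_ereal_mult_left) auto
  also have "Limsup (at_right 0) (\<lambda>\<epsilon>. ereal (\<epsilon>/\<theta>) * G (\<epsilon>/\<theta>)) = Limsup (at_right 0) (\<lambda>\<epsilon>. ereal \<epsilon> * G \<epsilon>)"
    using Limsup_rescale[OF assms, of "\<lambda>\<epsilon>. ereal \<epsilon> * G \<epsilon>"] by simp
  finally show ?thesis unfolding upf_def G_def .
qed

lemma weak_LDP_scale:
  fixes E :: "'a::euclidean_space set"
  assumes "weak_LDP E \<Omega> P Z T J" "\<theta> > 0"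
  shows "weak_LDP E \<Omega> P Z (\<theta>*T) (\<lambda>q q'. ereal \<theta> * J ((1/\<theta>) *\<^sub>R q) ((1/\<theta>) *\<^sub>R q'))"
proof -
  let ?s = "\<lambda>x::'a. (1/\<theta>) *\<^sub>R x"
  note W = assms(1)[unfolded weak_LDP_alt]
  have nn: "\<forall>q q'. 0 \<le> ereal \<theta> * J (?s q) (?s q')"
    using W assms(2) by auto
  have lsc: "lower_semicont (\<lambda>(q, q'). ereal \<theta> * J (?s q) (?s q'))"
    unfolding lower_semicont_def
  proof (intro allI impI)
    fix x :: "'a \<times> 'a" and c
    assume "c < (case x of (q, q') \<Rightarrow> ereal \<theta> * J (?s q) (?s q'))"
    then have "ereal \<theta> * (ereal (1/\<theta>) * c) < ereal \<theta> * J (?s (fst x)) (?s (snd x))"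
      using ereal_cmult_inv[OF assms(2)] by (simp add: case_prod_beta)
    then have lt: "ereal (1/\<theta>) * c < (\<lambda>(q, q'). J q q') ((\<lambda>y. (?s (fst y), ?s (snd y))) x)"
      using assms(2) by (simp add: ereal_cmult_less_iff)
    have "lower_semicont (\<lambda>y. (\<lambda>(q, q'). J q q') ((\<lambda>y. (?s (fst y), ?s (snd y))) y))"
    proof -
      have a: "lower_semicont (\<lambda>(q, q'). J q q')" using W by (elim conjE)
      have b: "isCont (\<lambda>y. (?s (fst y), ?s (snd y))) y" for y by (intro continuous_intros)
      show ?thesis by (rule lsc_compose[OF a b])
    qed
    from this[unfolded lower_semicont_def, rule_format, OF lt]
    have "eventually (\<lambda>y. ereal (1/\<theta>) * c < J (?s (fst y)) (?s (snd y))) (nhds x)"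
      by (simp add: case_prod_beta)
    then show "eventually (\<lambda>y. c < (case y of (q, q') \<Rightarrow> ereal \<theta> * J (?s q) (?s q'))) (nhds x)"
    proof (rule eventually_mono)
      fix y assume "ereal (1/\<theta>) * c < J (?s (fst y)) (?s (snd y))"
      then have "ereal \<theta> * (ereal (1/\<theta>) * c) < ereal \<theta> * J (?s (fst y)) (?s (snd y))"
        using assms(2) by (simp add: ereal_cmult_less_iff)
      then show "c < (case y of (q, q') \<Rightarrow> ereal \<theta> * J (?s q) (?s q'))"
        using ereal_cmult_inv[OF assms(2)] by (simp add: case_prod_beta)
    qed
  qed
  have INFeq: "(INF q'\<in>U. ereal \<theta> * J (?s q) (?s q')) = ereal \<theta> * (INF q'\<in>?s ` U. J (?s q) q')" for q U
    using assms(2) by (simp add: INF_ereal_cmult image_image)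
  have low: "\<exists>L. ((\<lambda>\<delta>. lowf E \<Omega> P Z (\<theta>*T) q U \<delta>) \<longlongrightarrow> L) (at_right 0) \<and>
      - (INF q'\<in>U. ereal \<theta> * J (?s q) (?s q')) \<le> L" if "open U" for q U
  proof -
    have "open (?s ` U)" using that assms(2) by (intro open_scaling) auto
    then obtain L where L: "((\<lambda>\<delta>. lowf E \<Omega> P Z T (?s q) (?s ` U) \<delta>) \<longlongrightarrow> L) (at_right 0)"
       "- (INF q'\<in>?s ` U. J (?s q) q') \<le> L" using W by blast
    have "((\<lambda>\<delta>. ereal \<theta> * lowf E \<Omega> P Z T (?s q) (?s ` U) (\<delta>/\<theta>)) \<longlongrightarrow> ereal \<theta> * L) (at_right 0)"
      by (intro tendsto_cmult_ereal filterlim_compose[OF L(1) filterlim_rescale[OF assms(2)]]) auto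
    moreover have "- (INF q'\<in>U. ereal \<theta> * J (?s q) (?s q')) \<le> ereal \<theta> * L"
      unfolding INFeq using L(2) assms(2) by (simp add: ereal_mult_minus_right[symmetric] ereal_cmult_le_iff del: ereal_mult_minus_right)
    ultimately show ?thesis unfolding lowf_scale[OF assms(2)] by blast
  qed
  have up: "\<exists>L. ((\<lambda>\<delta>. upf E \<Omega> P Z (\<theta>*T) q V \<delta>) \<longlongrightarrow> L) (at_right 0) \<and>
      L \<le> - (INF q'\<in>V. ereal \<theta> * J (?s q) (?s q'))" if "compact V" for q V
  proof -
    have "compact (?s ` V)" using that by (intro compact_scaling)
    then obtain L where L: "((\<lambda>\<delta>. upf E \<Omega> P Z T (?s q) (?s ` V) \<delta>) \<longlongrightarrow> L) (at_right 0)"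
       "L \<le> - (INF q'\<in>?s ` V. J (?s q) q')" using W by blast
    have "((\<lambda>\<delta>. ereal \<theta> * upf E \<Omega> P Z T (?s q) (?s ` V) (\<delta>/\<theta>)) \<longlongrightarrow> ereal \<theta> * L) (at_right 0)"
      by (intro tendsto_cmult_ereal filterlim_compose[OF L(1) filterlim_rescale[OF assms(2)]]) auto
    moreover have "ereal \<theta> * L \<le> - (INF q'\<in>V. ereal \<theta> * J (?s q) (?s q'))"
      unfolding INFeq using L(2) assms(2) by (simp add: ereal_mult_minus_right[symmetric] ereal_cmult_le_iff del: ereal_mult_minus_right)
    ultimately show ?thesis unfolding upf_scale[OF assms(2)] by blast
  qed
  show ?thesis unfolding weak_LDP_alt using nn lsc low up by blast
qed



definition unappr :: "'a::euclidean_space set \<Rightarrow> 'a \<Rightarrow> bool" where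
  "unappr E q \<longleftrightarrow> (\<exists>\<delta>>0. eventually (\<lambda>\<epsilon>. \<forall>z\<in>E. \<delta> \<le> dist (\<epsilon> *\<^sub>R z) q) (at_right 0))"

lemma unappr_open: "open {q. unappr E q}"
  unfolding open_dist
proof (intro ballI)
  fix q assume "q \<in> {q. unappr E q}"
  then obtain \<delta> where d: "\<delta> > 0" "eventually (\<lambda>\<epsilon>. \<forall>z\<in>E. \<delta> \<le> dist (\<epsilon> *\<^sub>R z) q) (at_right 0)"
    unfolding unappr_def by blast
  have "unappr E q1" if "dist q1 q < \<delta>/2" for q1
    unfolding unappr_def
  proof (intro exI conjI)
    show "\<delta>/2 > 0" using d by simp
    show "eventually (\<lambda>\<epsilon>. \<forall>z\<in>E. \<delta>/2 \<le> dist (\<epsilon> *\<^sub>R z) q1) (at_right 0)"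
      using d(2)
    proof (rule eventually_mono)
      fix \<epsilon> assume h: "\<forall>z\<in>E. \<delta> \<le> dist (\<epsilon> *\<^sub>R z) q"
      show "\<forall>z\<in>E. \<delta>/2 \<le> dist (\<epsilon> *\<^sub>R z) q1"
      proof
        fix z assume "z \<in> E"
        then have "\<delta> \<le> dist (\<epsilon> *\<^sub>R z) q" using h by blast
        moreover have "dist (\<epsilon> *\<^sub>R z) q \<le> dist (\<epsilon> *\<^sub>R z) q1 + dist q1 q" by (rule dist_triangle)
        ultimately show "\<delta>/2 \<le> dist (\<epsilon> *\<^sub>R z) q1" using that by simp
      qed
    qed
  qed
  then show "\<exists>e>0. \<forall>y. dist y q < e \<longrightarrow> y \<in> {q. unappr E q}"
    using d(1) by (intro exI[of _ "\<delta>/2"]) auto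
qed

lemma unappr_scale:
  assumes "c > 0" "unappr E q"
  shows "unappr E (c *\<^sub>R q)"
proof -
  obtain \<delta> where d: "\<delta> > 0" "eventually (\<lambda>\<epsilon>. \<forall>z\<in>E. \<delta> \<le> dist (\<epsilon> *\<^sub>R z) q) (at_right 0)"
    using assms(2) unfolding unappr_def by blast
  have "eventually (\<lambda>\<epsilon>. \<forall>z\<in>E. \<delta> \<le> dist ((\<epsilon>/c) *\<^sub>R z) q) (at_right 0)"
    using filterlim_rescale[OF assms(1)] d(2) unfolding filterlim_iff by blast
  then have "eventually (\<lambda>\<epsilon>. \<forall>z\<in>E. c * \<delta> \<le> dist (\<epsilon> *\<^sub>R z) (c *\<^sub>R q)) (at_right 0)"
  proof (rule eventually_mono)
    fix \<epsilon> assume h: "\<forall>z\<in>E. \<delta> \<le> dist ((\<epsilon>/c) *\<^sub>R z) q"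
    show "\<forall>z\<in>E. c * \<delta> \<le> dist (\<epsilon> *\<^sub>R z) (c *\<^sub>R q)"
    proof
      fix z assume "z \<in> E"
      have "(\<epsilon>/c) *\<^sub>R z - q = (1/c) *\<^sub>R (\<epsilon> *\<^sub>R z - c *\<^sub>R q)" using assms(1) by (simp add: algebra_simps)
      then have "dist ((\<epsilon>/c) *\<^sub>R z) q = dist (\<epsilon> *\<^sub>R z) (c *\<^sub>R q) / c"
        using assms(1) by (simp add: dist_norm)
      then have e: "dist (\<epsilon> *\<^sub>R z) (c *\<^sub>R q) = c * dist ((\<epsilon>/c) *\<^sub>R z) q"
        using assms(1) by (simp add: field_simps)
      have "\<delta> \<le> dist ((\<epsilon>/c) *\<^sub>R z) q" using h \<open>z \<in> E\<close> by blast
      then show "c * \<delta> \<le> dist (\<epsilon> *\<^sub>R z) (c *\<^sub>R q)" unfolding e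
        using assms(1) by (simp add: mult_left_mono)
    qed
  qed
  then show ?thesis unfolding unappr_def using d(1) assms(1) by (intro exI[of _ "c*\<delta>"]) auto
qed

lemma unappr_scale_iff:
  assumes "c > 0"
  shows "unappr E (c *\<^sub>R q) \<longleftrightarrow> unappr E q"
proof
  assume "unappr E (c *\<^sub>R q)"
  from unappr_scale[OF _ this, of "1/c"] assms show "unappr E q" by simp
qed (use unappr_scale[OF assms] in blast)

lemma unappr_empty:
  assumes "unappr E q"
  obtains \<delta>0 where "\<delta>0 > 0" "\<And>\<delta>. 0 < \<delta> \<Longrightarrow> \<delta> \<le> \<delta>0 \<Longrightarrow> eventually (\<lambda>\<epsilon>. \<epsilon> > 0 \<and> {z\<in>E. dist (\<epsilon> *\<^sub>R z) q < \<delta>} = {}) (at_right 0)"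
proof -
  obtain d where d: "d > 0" "eventually (\<lambda>\<epsilon>. \<forall>z\<in>E. d \<le> dist (\<epsilon> *\<^sub>R z) q) (at_right 0)"
    using assms unfolding unappr_def by blast
  show ?thesis
  proof (rule that[OF d(1)])
    fix \<delta> assume "0 < \<delta>" "\<delta> \<le> d"
    show "eventually (\<lambda>\<epsilon>. \<epsilon> > 0 \<and> {z\<in>E. dist (\<epsilon> *\<^sub>R z) q < \<delta>} = {}) (at_right 0)"
      using eventually_conj[OF eventually_at_right_less d(2)]
      by (rule eventually_mono) (use \<open>\<delta> \<le> d\<close> in force)
  qed
qed

lemma weak_LDP_mod:
  fixes E :: "'a::euclidean_space set"
  assumes "weak_LDP E \<Omega> P Z T I"
  shows "weak_LDP E \<Omega> P Z T (\<lambda>q q'. if unappr E q then \<infinity> else I q q')"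
proof -
  note W = assms[unfolded weak_LDP_alt]
  let ?I = "\<lambda>q q'. if unappr E q then \<infinity> else I q q'"
  have nn: "\<forall>q q'. 0 \<le> ?I q q'" using W by auto
  have lsc: "lower_semicont (\<lambda>(q, q'). ?I q q')"
    unfolding lower_semicont_def
  proof (intro allI impI)
    fix x :: "'a \<times> 'a" and c assume c: "c < (case x of (q, q') \<Rightarrow> ?I q q')"
    show "eventually (\<lambda>y. c < (case y of (q, q') \<Rightarrow> ?I q q')) (nhds x)"
    proof (cases "unappr E (fst x)")
      case True
      have "open (fst -` {q. unappr E q})" by (intro open_vimage_fst unappr_open)
      then have "eventually (\<lambda>y. y \<in> fst -` {q. unappr E q}) (nhds x)"
        using True by (intro eventually_nhds_in_open) auto
      moreover from c True have "c < \<infinity>" by (simp add: case_prod_beta)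
      ultimately show ?thesis by (auto elim!: eventually_mono simp: case_prod_beta)
    next
      case False
      then have "c < (case x of (q, q') \<Rightarrow> I q q')" using c by (simp add: case_prod_beta)
      then have "eventually (\<lambda>y. c < (case y of (q, q') \<Rightarrow> I q q')) (nhds x)"
        using W unfolding lower_semicont_def by blast
      then show ?thesis by (rule eventually_mono) (auto simp: case_prod_beta)
    qed
  qed
  have low: "\<exists>L. ((\<lambda>\<delta>. lowf E \<Omega> P Z T q U \<delta>) \<longlongrightarrow> L) (at_right 0) \<and> - (INF q'\<in>U. ?I q q') \<le> L"
    if "open U" for q U
  proof (cases "unappr E q")
    case True
    obtain \<delta>0 where d0: "\<delta>0 > 0" "\<And>\<delta>. 0 < \<delta> \<Longrightarrow> \<delta> \<le> \<delta>0 \<Longrightarrow> eventually (\<lambda>\<epsilon>. \<epsilon> > 0 \<and> {z\<in>E. dist (\<epsilon> *\<^sub>R z) q < \<delta>} = {}) (at_right 0)"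
      by (rule unappr_empty[OF True]) blast
    have "lowf E \<Omega> P Z T q U \<delta> = \<infinity>" if "0 < \<delta>" "\<delta> \<le> \<delta>0" for \<delta>
    proof -
      have ev: "eventually (\<lambda>\<epsilon>. ereal \<epsilon> * elog (INF z\<in>{z\<in>E. dist (\<epsilon> *\<^sub>R z) q < \<delta>}. ereal (scaled_prob \<Omega> P Z T \<epsilon> z U)) = \<infinity>) (at_right 0)"
        using d0(2)[OF that]
      proof (rule eventually_mono)
        fix \<epsilon> :: real assume h: "\<epsilon> > 0 \<and> {z\<in>E. dist (\<epsilon> *\<^sub>R z) q < \<delta>} = {}"
        then have e: "{z\<in>E. dist (\<epsilon> *\<^sub>R z) q < \<delta>} = {}" by blast
        show "ereal \<epsilon> * elog (INF z\<in>{z\<in>E. dist (\<epsilon> *\<^sub>R z) q < \<delta>}. ereal (scaled_prob \<Omega> P Z T \<epsilon> z U)) = \<infinity>"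
          unfolding e using h by (simp add: elog_def top_ereal_def bot_ereal_def)
      qed
      have "lowf E \<Omega> P Z T q U \<delta> = Liminf (at_right 0) (\<lambda>\<epsilon>::real. \<infinity>)"
        unfolding lowf_def using Liminf_eq[OF ev] by simp
      then show ?thesis by (simp add: Liminf_const)
    qed
    then have "eventually (\<lambda>\<delta>. lowf E \<Omega> P Z T q U \<delta> = \<infinity>) (at_right 0)"
      using d0(1) unfolding eventually_at_right_field by (intro exI[of _ \<delta>0]) auto
    then show ?thesis by (intro exI[of _ \<infinity>]) (auto intro: tendsto_eventually)
  next
    case False
    then show ?thesis using W that by simp
  qed
  have up: "\<exists>L. ((\<lambda>\<delta>. upf E \<Omega> P Z T q V \<delta>) \<longlongrightarrow> L) (at_right 0) \<and> L \<le> - (INF q'\<in>V. ?I q q')"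
    if "compact V" for q V
  proof (cases "unappr E q")
    case True
    obtain \<delta>0 where d0: "\<delta>0 > 0" "\<And>\<delta>. 0 < \<delta> \<Longrightarrow> \<delta> \<le> \<delta>0 \<Longrightarrow> eventually (\<lambda>\<epsilon>. \<epsilon> > 0 \<and> {z\<in>E. dist (\<epsilon> *\<^sub>R z) q < \<delta>} = {}) (at_right 0)"
      by (rule unappr_empty[OF True]) blast
    have "upf E \<Omega> P Z T q V \<delta> = -\<infinity>" if "0 < \<delta>" "\<delta> \<le> \<delta>0" for \<delta>
    proof -
      have ev: "eventually (\<lambda>\<epsilon>. ereal \<epsilon> * elog (SUP z\<in>{z\<in>E. dist (\<epsilon> *\<^sub>R z) q < \<delta>}. ereal (scaled_prob \<Omega> P Z T \<epsilon> z V)) = -\<infinity>) (at_right 0)"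
        using d0(2)[OF that]
      proof (rule eventually_mono)
        fix \<epsilon> :: real assume h: "\<epsilon> > 0 \<and> {z\<in>E. dist (\<epsilon> *\<^sub>R z) q < \<delta>} = {}"
        then have e: "{z\<in>E. dist (\<epsilon> *\<^sub>R z) q < \<delta>} = {}" by blast
        show "ereal \<epsilon> * elog (SUP z\<in>{z\<in>E. dist (\<epsilon> *\<^sub>R z) q < \<delta>}. ereal (scaled_prob \<Omega> P Z T \<epsilon> z V)) = -\<infinity>"
          unfolding e using h by (simp add: elog_def top_ereal_def bot_ereal_def)
      qed
      have "upf E \<Omega> P Z T q V \<delta> = Limsup (at_right 0) (\<lambda>\<epsilon>::real. -\<infinity>)"
        unfolding upf_def using Limsup_eq[OF ev] by simp
      then show ?thesis by (simp add: Limsup_const)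
    qed
    then have "eventually (\<lambda>\<delta>. upf E \<Omega> P Z T q V \<delta> = -\<infinity>) (at_right 0)"
      using d0(1) unfolding eventually_at_right_field by (intro exI[of _ \<delta>0]) auto
    then show ?thesis by (intro exI[of _ "-\<infinity>"]) (auto intro: tendsto_eventually)
  next
    case False
    then show ?thesis using W that by simp
  qed
  show ?thesis unfolding weak_LDP_alt using nn lsc low up by blast
qed

lemma Limsup_ge_frequently:
  assumes "frequently (\<lambda>x. a \<le> f x) F"
  shows "a \<le> Limsup F (f :: _ \<Rightarrow> 'b::complete_linorder)"
  unfolding Limsup_def
proof (rule INF_greatest)
  fix P assume "P \<in> {P. eventually P F}"
  then have "frequently (\<lambda>x. P x \<and> a \<le> f x) F"
    using frequently_eventually_conj[OF assms] by auto
  then obtain x where "P x" "a \<le> f x" by (auto dest: frequently_ex)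
  then show "a \<le> Sup (f ` Collect P)" by (auto intro: SUP_upper2)
qed

lemma ereal_add_le_from_below:
  fixes L M :: ereal
  assumes "\<And>y. y < L \<Longrightarrow> y + ereal c \<le> M"
  shows "L + ereal c \<le> M"
proof (rule dense_le)
  fix z assume "z < L + ereal c"
  then have "z - ereal c < L" by (cases z; cases L) auto
  then have "(z - ereal c) + ereal c \<le> M" by (rule assms)
  then show "z \<le> M" by (cases z) auto
qed


lemma markov_step:
  fixes E :: "'a::euclidean_space set"
  assumes mp: "markov_process E \<Omega> P Z"
    and eps: "\<epsilon> > 0" and T: "T \<ge> 0" and T': "T' \<ge> 0" and z: "z \<in> E"
    and Bt: "Bt \<in> sets borel" and V: "V \<in> sets borel" and BtV: "Bt \<subseteq> V"
    and hb: "\<And>z'. z' \<in> E \<Longrightarrow> dist (\<epsilon> *\<^sub>R z') q' < \<rho> \<Longrightarrow> b \<le> scaled_prob \<Omega> P Z T' \<epsilon> z' Bt"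
  shows "scaled_prob \<Omega> P Z T \<epsilon> z (ball q' \<rho>) * b \<le> scaled_prob \<Omega> P Z (T+T') \<epsilon> z V"
proof -
  note M = mp[unfolded markov_process_def]
  have ps: "prob_space (P z)" and sets: "sets (P z) = sets \<Omega>" using M z by auto
  interpret prob_space "P z" by (rule ps)
  have sp: "space (P z) = space \<Omega>" using sets by (rule sets_eq_imp_space_eq)
  define s where "s = T/\<epsilon>"
  define t where "t = T'/\<epsilon>"
  have s0: "s \<ge> 0" "t \<ge> 0" using eps T T' by (auto simp: s_def t_def)
  have st: "(T+T')/\<epsilon> = s + t" by (simp add: s_def t_def add_divide_distrib)
  have Zmeas: "\<And>r. r \<ge> 0 \<Longrightarrow> Z r \<in> measurable \<Omega> borel" using M by blast
  have ZE: "\<And>\<omega> r. \<omega> \<in> space \<Omega> \<Longrightarrow> r \<ge> 0 \<Longrightarrow> Z r \<omega> \<in> E" using M by blast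
  have Mk: "\<forall>z\<in>E. \<forall>s\<ge>0. \<forall>t\<ge>0. \<forall>A\<in>sets borel. \<forall>F\<in>nat_filt \<Omega> Z s.
        measure (P z) (F \<inter> {\<omega>\<in>space \<Omega>. Z (s + t) \<omega> \<in> A}) =
        (\<integral>\<omega>. indicator F \<omega> * measure (P (Z s \<omega>)) {\<omega>'\<in>space \<Omega>. Z t \<omega>' \<in> A} \<partial>P z)"
    using M by (elim conjE)
  have Mker: "\<forall>t\<ge>0. \<forall>A\<in>sets borel.
        (\<lambda>z. measure (P z) {\<omega>\<in>space \<Omega>. Z t \<omega> \<in> A}) \<in> borel_measurable (restrict_space borel E)"
    using M by (elim conjE)
  have Mps: "\<forall>z\<in>E. prob_space (P z)" using M by blast
  have sc: "(\<lambda>x::'a. \<epsilon> *\<^sub>R x) \<in> measurable borel borel" by measurable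
  define A where "A = (\<lambda>x::'a. \<epsilon> *\<^sub>R x) -` Bt"
  have A: "A \<in> sets borel" unfolding A_def by (rule measurable_sets_borel[OF sc Bt])
  define B1 where "B1 = (\<lambda>x::'a. \<epsilon> *\<^sub>R x) -` ball q' \<rho>"
  have B1: "B1 \<in> sets borel" unfolding B1_def by (rule measurable_sets_borel[OF sc]) simp
  define F where "F = Z s -` B1 \<inter> space \<Omega>"
  have F_filt: "F \<in> nat_filt \<Omega> Z s" unfolding nat_filt_def F_def
  proof (rule sigma_sets.Basic)
    show "Z s -` B1 \<inter> space \<Omega> \<in> (\<Union>r\<in>{0..s}. {Z r -` B \<inter> space \<Omega> |B. B \<in> sets borel})"
    proof (rule UN_I[of s])
      show "s \<in> {0..s}" using s0 by simp
      show "Z s -` B1 \<inter> space \<Omega> \<in> {Z s -` B \<inter> space \<Omega> |B. B \<in> sets borel}"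
        using B1 by blast
    qed
  qed
  have F_sets: "F \<in> sets \<Omega>" unfolding F_def by (rule measurable_sets[OF Zmeas[OF s0(1)] B1])
  define g where "g \<omega> = measure (P (Z s \<omega>)) {\<omega>'\<in>space \<Omega>. Z t \<omega>' \<in> A}" for \<omega>
  have eq: "measure (P z) (F \<inter> {\<omega>\<in>space \<Omega>. Z (s + t) \<omega> \<in> A}) = (\<integral>\<omega>. indicator F \<omega> * g \<omega> \<partial>P z)"
    unfolding g_def using Mk z s0 A F_filt by blast
  have gsp: "g \<omega> = scaled_prob \<Omega> P Z T' \<epsilon> (Z s \<omega>) Bt" for \<omega>
    unfolding g_def scaled_prob_def A_def t_def by simp
  have gb: "b \<le> g \<omega>" if "\<omega> \<in> F" for \<omega>
  proof -
    have "\<omega> \<in> space \<Omega>" "\<epsilon> *\<^sub>R Z s \<omega> \<in> ball q' \<rho>" using that unfolding F_def B1_def by auto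
    then show ?thesis unfolding gsp using ZE[of \<omega> s] s0 by (intro hb) (auto simp: dist_commute)
  qed
  have g01: "0 \<le> g \<omega> \<and> g \<omega> \<le> 1" if "\<omega> \<in> space \<Omega>" for \<omega>
  proof -
    have "prob_space (P (Z s \<omega>))" using Mps ZE[OF that s0(1)] by blast
    then show ?thesis unfolding g_def by (simp add: prob_space.prob_le_1)
  qed
  have Zs_E: "Z s \<in> measurable \<Omega> (restrict_space borel E)"
    by (rule measurable_restrict_space2) (use ZE s0 Zmeas in auto)
  have gm: "g \<in> borel_measurable \<Omega>"
    unfolding g_def using measurable_compose[OF Zs_E, of "\<lambda>z. measure (P z) {\<omega>\<in>space \<Omega>. Z t \<omega> \<in> A}"] Mker s0 A
    by (auto simp: comp_def)
  have int1: "integrable (P z) (\<lambda>\<omega>. indicator F \<omega> * g \<omega>)"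
  proof (rule integrable_const_bound[where B=1])
    show "AE x in P z. norm (indicator F x * g x) \<le> 1"
      using g01 by (intro AE_I2) (auto simp: sp indicator_def)
    show "(\<lambda>\<omega>. indicator F \<omega> * g \<omega>) \<in> borel_measurable (P z)"
      unfolding measurable_cong_sets[OF sets refl] using gm F_sets by measurable
  qed
  have int2: "integrable (P z) (\<lambda>\<omega>. indicator F \<omega> * b)"
  proof (rule integrable_const_bound[where B="\<bar>b\<bar>"])
    show "AE x in P z. norm (indicator F x * b) \<le> \<bar>b\<bar>"
      by (intro AE_I2) (auto simp: indicator_def)
    show "(\<lambda>\<omega>. indicator F \<omega> * b) \<in> borel_measurable (P z)"
      unfolding measurable_cong_sets[OF sets refl] using F_sets by measurable
  qed
  have "scaled_prob \<Omega> P Z T \<epsilon> z (ball q' \<rho>) = measure (P z) F"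
    unfolding scaled_prob_def F_def B1_def s_def by (rule arg_cong[where f="measure (P z)"]) auto
  then have "scaled_prob \<Omega> P Z T \<epsilon> z (ball q' \<rho>) * b = (\<integral>\<omega>. indicator F \<omega> * b \<partial>P z)"
    using F_sets sets sp by simp
  also have "\<dots> \<le> (\<integral>\<omega>. indicator F \<omega> * g \<omega> \<partial>P z)"
    by (rule integral_mono[OF int2 int1]) (auto simp: indicator_def gb)
  also have "\<dots> = measure (P z) (F \<inter> {\<omega>\<in>space \<Omega>. Z (s + t) \<omega> \<in> A})" using eq by simp
  also have "\<dots> \<le> measure (P z) {\<omega>\<in>space \<Omega>. \<epsilon> *\<^sub>R Z (s + t) \<omega> \<in> V}"
  proof (rule finite_measure_mono)
    show "F \<inter> {\<omega>\<in>space \<Omega>. Z (s + t) \<omega> \<in> A} \<subseteq> {\<omega>\<in>space \<Omega>. \<epsilon> *\<^sub>R Z (s + t) \<omega> \<in> V}"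
      using BtV unfolding A_def by auto
    have "(\<lambda>\<omega>. \<epsilon> *\<^sub>R Z (s + t) \<omega>) \<in> borel_measurable \<Omega>"
    proof -
      have "Z (s+t) \<in> borel_measurable \<Omega>" using Zmeas s0 by simp
      then show ?thesis by measurable
    qed
    from measurable_sets[OF this V]
    show "{\<omega>\<in>space \<Omega>. \<epsilon> *\<^sub>R Z (s + t) \<omega> \<in> V} \<in> sets (P z)"
      unfolding sets by (simp add: vimage_def Int_def conj_commute)
  qed
  also have "\<dots> = scaled_prob \<Omega> P Z (T+T') \<epsilon> z V"
    unfolding scaled_prob_def st ..
  finally show ?thesis .
qed


lemma wl_low:
  assumes "weak_LDP E \<Omega> P Z T I" "open U"
  shows "\<exists>L. ((\<lambda>\<delta>. lowf E \<Omega> P Z T q U \<delta>) \<longlongrightarrow> L) (at_right 0) \<and> - (INF q'\<in>U. I q q') \<le> L"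
proof -
  have "\<forall>q U. open U \<longrightarrow> (\<exists>L. ((\<lambda>\<delta>. lowf E \<Omega> P Z T q U \<delta>) \<longlongrightarrow> L) (at_right 0) \<and> - (INF q'\<in>U. I q q') \<le> L)"
    using assms(1) unfolding weak_LDP_alt by (elim conjE)
  then show ?thesis using assms(2) by blast
qed

lemma wl_up:
  assumes "weak_LDP E \<Omega> P Z T I" "compact V"
  shows "\<exists>L. ((\<lambda>\<delta>. upf E \<Omega> P Z T q V \<delta>) \<longlongrightarrow> L) (at_right 0) \<and> L \<le> - (INF q'\<in>V. I q q')"
proof -
  have "\<forall>q V. compact V \<longrightarrow> (\<exists>L. ((\<lambda>\<delta>. upf E \<Omega> P Z T q V \<delta>) \<longlongrightarrow> L) (at_right 0) \<and> L \<le> - (INF q'\<in>V. I q q'))"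
    using assms(1) unfolding weak_LDP_alt by (elim conjE)
  then show ?thesis using assms(2) by blast
qed

lemma wl_nn: "weak_LDP E \<Omega> P Z T I \<Longrightarrow> 0 \<le> I q q'"
  unfolding weak_LDP_alt by blast

lemma wl_lsc: "weak_LDP E \<Omega> P Z T I \<Longrightarrow> lower_semicont (\<lambda>(q, q'). I q q')"
  unfolding weak_LDP_alt by blast

lemma per_eps:
  fixes E :: "'a::euclidean_space set"
  assumes mp: "markov_process E \<Omega> P Z" and T: "T > 0" and T': "T' > 0"
    and eps: "\<epsilon> > 0"
    and ne: "{z\<in>E. dist (\<epsilon> *\<^sub>R z) q < \<delta>} \<noteq> {}"
    and y: "y < ereal \<epsilon> * elog (INF z\<in>{z\<in>E. dist (\<epsilon> *\<^sub>R z) q < \<delta>}. ereal (scaled_prob \<Omega> P Z T \<epsilon> z (ball q' \<rho>)))"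
    and b: "b > 0" "c \<le> \<epsilon> * ln b"
    and hb: "\<forall>z'\<in>E. dist (\<epsilon> *\<^sub>R z') q' < \<rho> \<longrightarrow> b \<le> scaled_prob \<Omega> P Z T' \<epsilon> z' (ball q'' r)"
  shows "y + ereal c \<le> ereal \<epsilon> * elog (SUP z\<in>{z\<in>E. dist (\<epsilon> *\<^sub>R z) q < \<delta>}. ereal (scaled_prob \<Omega> P Z (T+T') \<epsilon> z (cball q'' r)))"
proof -
  let ?S = "{z\<in>E. dist (\<epsilon> *\<^sub>R z) q < \<delta>}"
  let ?X = "INF z\<in>?S. ereal (scaled_prob \<Omega> P Z T \<epsilon> z (ball q' \<rho>))"
  let ?Y = "SUP z\<in>?S. ereal (scaled_prob \<Omega> P Z (T+T') \<epsilon> z (cball q'' r))"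
  obtain z0 where z0: "z0 \<in> ?S" using ne by blast
  have X0: "0 \<le> ?X" by (intro INF_greatest) (simp add: scaled_prob_def)
  have Xle: "?X \<le> ereal (scaled_prob \<Omega> P Z T \<epsilon> z0 (ball q' \<rho>))" using z0 by (rule INF_lower)
  then obtain x1 where x1: "?X = ereal x1" using X0 by (cases ?X) auto
  have "x1 \<noteq> 0"
  proof
    assume "x1 = 0"
    then have h: "ereal \<epsilon> * elog ?X = -\<infinity>" using x1 eps by (simp add: elog_def)
    show False using y unfolding h by simp
  qed
  then have x1p: "x1 > 0" using X0 x1 by simp
  have mk: "scaled_prob \<Omega> P Z T \<epsilon> z0 (ball q' \<rho>) * b \<le> scaled_prob \<Omega> P Z (T+T') \<epsilon> z0 (cball q'' r)"
    using z0 T T' eps hb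
    by (intro markov_step[OF mp, where Bt="ball q'' r" and V="cball q'' r" and q'=q' and \<rho>=\<rho> and b=b]) auto
  have "x1 * b \<le> scaled_prob \<Omega> P Z T \<epsilon> z0 (ball q' \<rho>) * b"
    using Xle x1 b by (intro mult_right_mono) auto
  also note mk
  finally have "ereal (x1 * b) \<le> ereal (scaled_prob \<Omega> P Z (T+T') \<epsilon> z0 (cball q'' r))" by simp
  also have "\<dots> \<le> ?Y" using z0 by (rule SUP_upper)
  finally have Yge: "ereal (x1 * b) \<le> ?Y" .
  show ?thesis
  proof (cases ?Y)
    case PInf
    then show ?thesis using eps by (simp add: elog_def)
  next
    case MInf
    then show ?thesis using Yge by simp
  next
    case (real yv)
    then have yv: "x1 * b \<le> yv" using Yge by simp
    have xb: "0 < x1 * b" using x1p b by simp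
    have "y < ereal (\<epsilon> * ln x1)" using y x1 x1p by (simp add: elog_def)
    then have "y + ereal c \<le> ereal (\<epsilon> * ln x1) + ereal (\<epsilon> * ln b)"
      using b by (intro add_mono) auto
    also have "\<dots> = ereal (\<epsilon> * ln (x1 * b))" using x1p b by (simp add: ln_mult distrib_left)
    also have "\<dots> \<le> ereal (\<epsilon> * ln yv)" using yv xb eps by simp
    also have "\<dots> = ereal \<epsilon> * elog ?Y" using real yv xb by (simp add: elog_def)
    finally show ?thesis .
  qed
qed

lemma subadd:
  fixes E :: "'a::euclidean_space set"
  assumes mp: "markov_process E \<Omega> P Z" and T: "T > 0" and T': "T' > 0"
    and W1: "weak_LDP E \<Omega> P Z T I1" and W2: "weak_LDP E \<Omega> P Z T' I2"
    and W3: "weak_LDP E \<Omega> P Z (T+T') I3"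
    and nu: "\<not> unappr E q"
  shows "I3 q q'' \<le> I1 q q' + I2 q' q''"
proof -
  note W1' = W1[unfolded weak_LDP_alt] and W2' = W2[unfolded weak_LDP_alt] and W3' = W3[unfolded weak_LDP_alt]
  have nn1: "0 \<le> I1 q q'" using W1 by (rule wl_nn)
  have nn2: "0 \<le> I2 q' q''" using W2 by (rule wl_nn)
  have step: "(INF y\<in>cball q'' r. I3 q y) \<le> I1 q q' + I2 q' q''" if r: "r > 0" for r
  proof (cases "I1 q q' = \<infinity> \<or> I2 q' q'' = \<infinity>")
    case True then show ?thesis using nn1 nn2 by auto
  next
    case False
    then obtain a1 a2 where a1: "I1 q q' = ereal a1" and a2: "I2 q' q'' = ereal a2"
      using nn1 nn2 by (cases "I1 q q'"; cases "I2 q' q''") auto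
    have a0: "a1 \<ge> 0" "a2 \<ge> 0" using nn1 nn2 a1 a2 by auto
    show ?thesis
    proof (rule ereal_le_epsilon2)
      fix \<eta> :: real assume \<eta>: "\<eta> > 0"
      define c where "c = - a2 - \<eta>"
      have c0: "c < 0" using a0 \<eta> by (simp add: c_def)
      obtain L2 where L2: "((\<lambda>\<rho>. lowf E \<Omega> P Z T' q' (ball q'' r) \<rho>) \<longlongrightarrow> L2) (at_right 0)"
          "- (INF y\<in>ball q'' r. I2 q' y) \<le> L2"
        using wl_low[OF W2, of "ball q'' r" q'] by auto
      have "(INF y\<in>ball q'' r. I2 q' y) \<le> I2 q' q''" using r by (intro INF_lower) simp
      then have "- I2 q' q'' \<le> - (INF y\<in>ball q'' r. I2 q' y)" by simp
      then have m: "- ereal a2 \<le> L2" using L2(2) a2 by simp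
      have "ereal c < - ereal a2" using \<eta> by (simp add: c_def)
      then have "ereal c < L2" using m by (rule less_le_trans)
      then have "eventually (\<lambda>\<rho>. ereal c < lowf E \<Omega> P Z T' q' (ball q'' r) \<rho>) (at_right 0)"
        by (rule order_tendstoD(1)[OF L2(1)])
      then have "eventually (\<lambda>\<rho>. 0 < \<rho> \<and> ereal c < lowf E \<Omega> P Z T' q' (ball q'' r) \<rho>) (at_right 0)"
        using eventually_at_right_less by (rule eventually_conj[rotated])
      then obtain \<rho> where \<rho>: "\<rho> > 0" "ereal c < lowf E \<Omega> P Z T' q' (ball q'' r) \<rho>"
        using eventually_happens'[of "at_right (0::real)"] by auto
      have evb: "eventually (\<lambda>\<epsilon>. \<exists>b>0. c \<le> \<epsilon> * ln b \<and>
          (\<forall>z'\<in>E. dist (\<epsilon> *\<^sub>R z') q' < \<rho> \<longrightarrow> b \<le> scaled_prob \<Omega> P Z T' \<epsilon> z' (ball q'' r))) (at_right 0)"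
        using less_LiminfD[OF \<rho>(2)[unfolded lowf_def]] eventually_at_right_less[of "0::real"]
      proof eventually_elim
        case (elim \<epsilon>)
        let ?S = "{z\<in>E. dist (\<epsilon> *\<^sub>R z) q' < \<rho>}"
        let ?X = "INF z\<in>?S. ereal (scaled_prob \<Omega> P Z T' \<epsilon> z (ball q'' r))"
        show ?case
        proof (cases "?S = {}")
          case True
          then show ?thesis using c0 by (intro exI[of _ 1]) auto
        next
          case False
          then obtain z0 where z0: "z0 \<in> ?S" by blast
          have X0: "0 \<le> ?X" by (intro INF_greatest) (simp add: scaled_prob_def)
          have Xle: "?X \<le> ereal (scaled_prob \<Omega> P Z T' \<epsilon> z0 (ball q'' r))" using z0 by (rule INF_lower)
          then obtain x where x: "?X = ereal x" using X0 by (cases ?X) auto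
          have "x \<noteq> 0"
          proof
            assume "x = 0"
            then have "ereal \<epsilon> * elog ?X = -\<infinity>" using x elim by (simp add: elog_def)
            then show False using elim by simp
          qed
          then have xp: "x > 0" using X0 x by simp
          have "ereal c < ereal (\<epsilon> * ln x)" using elim x xp by (simp add: elog_def)
          moreover have "\<forall>z'\<in>E. dist (\<epsilon> *\<^sub>R z') q' < \<rho> \<longrightarrow> x \<le> scaled_prob \<Omega> P Z T' \<epsilon> z' (ball q'' r)"
          proof (intro ballI impI)
            fix z' assume "z' \<in> E" "dist (\<epsilon> *\<^sub>R z') q' < \<rho>"
            then have "?X \<le> ereal (scaled_prob \<Omega> P Z T' \<epsilon> z' (ball q'' r))" by (intro INF_lower) auto
            then show "x \<le> scaled_prob \<Omega> P Z T' \<epsilon> z' (ball q'' r)" using x by simp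
          qed
          ultimately show ?thesis using xp by (intro exI[of _ x]) auto
        qed
      qed
      have key: "lowf E \<Omega> P Z T q (ball q' \<rho>) \<delta> + ereal c \<le> upf E \<Omega> P Z (T+T') q (cball q'' r) \<delta>"
        if \<delta>: "\<delta> > 0" for \<delta>
      proof (rule ereal_add_le_from_below)
        fix y assume y: "y < lowf E \<Omega> P Z T q (ball q' \<rho>) \<delta>"
        have ev1: "eventually (\<lambda>\<epsilon>. y < ereal \<epsilon> * elog (INF z\<in>{z\<in>E. dist (\<epsilon> *\<^sub>R z) q < \<delta>}. ereal (scaled_prob \<Omega> P Z T \<epsilon> z (ball q' \<rho>)))) (at_right 0)"
          using less_LiminfD[OF y[unfolded lowf_def]] .
        have fr: "frequently (\<lambda>\<epsilon>. {z\<in>E. dist (\<epsilon> *\<^sub>R z) q < \<delta>} \<noteq> {}) (at_right 0)"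
        proof -
          have ne: "\<not> eventually (\<lambda>\<epsilon>. \<forall>z\<in>E. \<delta> \<le> dist (\<epsilon> *\<^sub>R z) q) (at_right 0)"
            using nu \<delta> unfolding unappr_def by blast
          have eq: "\<And>\<epsilon>. ({z\<in>E. dist (\<epsilon> *\<^sub>R z) q < \<delta>} = {}) = (\<forall>z\<in>E. \<delta> \<le> dist (\<epsilon> *\<^sub>R z) q)"
            by (auto simp: not_less)
          show ?thesis unfolding frequently_def not_not eq using ne .
        qed
        have "frequently (\<lambda>\<epsilon>. y + ereal c \<le> ereal \<epsilon> * elog (SUP z\<in>{z\<in>E. dist (\<epsilon> *\<^sub>R z) q < \<delta>}. ereal (scaled_prob \<Omega> P Z (T+T') \<epsilon> z (cball q'' r)))) (at_right 0)"
          using frequently_eventually_conj[OF fr eventually_conj[OF eventually_conj[OF ev1 evb] eventually_at_right_less[of "0::real"]]]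
        proof (rule frequently_elim1)
          fix \<epsilon> assume h: "((y < ereal \<epsilon> * elog (INF z\<in>{z\<in>E. dist (\<epsilon> *\<^sub>R z) q < \<delta>}. ereal (scaled_prob \<Omega> P Z T \<epsilon> z (ball q' \<rho>))) \<and>
              (\<exists>b>0. c \<le> \<epsilon> * ln b \<and> (\<forall>z'\<in>E. dist (\<epsilon> *\<^sub>R z') q' < \<rho> \<longrightarrow> b \<le> scaled_prob \<Omega> P Z T' \<epsilon> z' (ball q'' r)))) \<and> 0 < \<epsilon>) \<and>
              {z\<in>E. dist (\<epsilon> *\<^sub>R z) q < \<delta>} \<noteq> {}"
          then obtain b where b: "b > 0" "c \<le> \<epsilon> * ln b"
            "\<forall>z'\<in>E. dist (\<epsilon> *\<^sub>R z') q' < \<rho> \<longrightarrow> b \<le> scaled_prob \<Omega> P Z T' \<epsilon> z' (ball q'' r)" by blast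
          show "y + ereal c \<le> ereal \<epsilon> * elog (SUP z\<in>{z\<in>E. dist (\<epsilon> *\<^sub>R z) q < \<delta>}. ereal (scaled_prob \<Omega> P Z (T+T') \<epsilon> z (cball q'' r)))"
            using h by (intro per_eps[OF mp T T' _ _ _ b]) auto
        qed
        then show "y + ereal c \<le> upf E \<Omega> P Z (T+T') q (cball q'' r) \<delta>"
          unfolding upf_def by (rule Limsup_ge_frequently)
      qed
      obtain L1 where L1: "((\<lambda>\<delta>. lowf E \<Omega> P Z T q (ball q' \<rho>) \<delta>) \<longlongrightarrow> L1) (at_right 0)"
          "- (INF y\<in>ball q' \<rho>. I1 q y) \<le> L1"
        using wl_low[OF W1, of "ball q' \<rho>" q] by auto
      obtain L3 where L3: "((\<lambda>\<delta>. upf E \<Omega> P Z (T+T') q (cball q'' r) \<delta>) \<longlongrightarrow> L3) (at_right 0)"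
          "L3 \<le> - (INF y\<in>cball q'' r. I3 q y)"
        using wl_up[OF W3 compact_cball, of q q'' r] by auto
      have L13: "L1 + ereal c \<le> L3"
      proof (rule ereal_add_le_from_below)
        fix y assume "y < L1"
        then have "eventually (\<lambda>\<delta>. y < lowf E \<Omega> P Z T q (ball q' \<rho>) \<delta>) (at_right 0)"
          by (rule order_tendstoD(1)[OF L1(1)])
        then have "eventually (\<lambda>\<delta>. y + ereal c \<le> upf E \<Omega> P Z (T+T') q (cball q'' r) \<delta>) (at_right 0)"
          using eventually_at_right_less[of "0::real"]
        proof eventually_elim
          case (elim \<delta>)
          then have "y + ereal c \<le> lowf E \<Omega> P Z T q (ball q' \<rho>) \<delta> + ereal c"
            by (intro add_right_mono) auto
          also have "\<dots> \<le> upf E \<Omega> P Z (T+T') q (cball q'' r) \<delta>" using key elim by blast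
          finally show ?case .
        qed
        then show "y + ereal c \<le> L3" by (rule tendsto_lowerbound[OF L3(1)]) simp
      qed
      have "(INF y\<in>ball q' \<rho>. I1 q y) \<le> I1 q q'" using \<rho>(1) by (intro INF_lower) simp
      then have "- I1 q q' \<le> - (INF y\<in>ball q' \<rho>. I1 q y)" by simp
      then have "- ereal a1 \<le> L1" using L1(2) a1 by simp
      then have "- ereal a1 + ereal c \<le> L1 + ereal c" by (rule add_right_mono)
      also note L13
      also note L3(2)
      finally have "- ereal (a1 - c) \<le> - (INF y\<in>cball q'' r. I3 q y)" by simp
      then have "(INF y\<in>cball q'' r. I3 q y) \<le> ereal (a1 - c)"
        by (cases "INF y\<in>cball q'' r. I3 q y") auto
      moreover have "a1 - c = a1 + a2 + \<eta>" by (simp add: c_def)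
      ultimately show "(INF y\<in>cball q'' r. I3 q y) \<le> I1 q q' + I2 q' q'' + ereal \<eta>"
        using a1 a2 by simp
    qed
  qed
  show ?thesis
  proof (rule ccontr)
    assume "\<not> ?thesis"
    then have lt: "I1 q q' + I2 q' q'' < I3 q q''" by simp
    obtain s' where s': "I1 q q' + I2 q' q'' < s'" "s' < I3 q q''" using dense[OF lt] by blast
    have lsc3: "lower_semicont (\<lambda>(a, b). I3 a b)" using W3 by (rule wl_lsc)
    have "eventually (\<lambda>y. s' < (case y of (a, b) \<Rightarrow> I3 a b)) (nhds (q, q''))"
      using lsc3[unfolded lower_semicont_def, rule_format, of s' "(q, q'')"] s'(2) by simp
    then obtain e where e: "e > 0" "\<And>y. dist y (q, q'') < e \<Longrightarrow> s' < (case y of (a, b) \<Rightarrow> I3 a b)"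
      unfolding eventually_nhds_metric by blast
    have "s' \<le> (INF y\<in>cball q'' (e/2). I3 q y)"
    proof (rule INF_greatest)
      fix y assume "y \<in> cball q'' (e/2)"
      then have "dist (q, y) (q, q'') < e" using e(1) by (simp add: dist_Pair_Pair dist_commute)
      then show "s' \<le> I3 q y" using e(2)[of "(q, y)"] by simp
    qed
    moreover have "(INF y\<in>cball q'' (e/2). I3 q y) \<le> I1 q q' + I2 q' q''" using step[of "e/2"] e by simp
    ultimately show False using s'(1) by simp
  qed
qed


theorem proposition2p1:
  fixes E :: "'a::euclidean_space set" and \<Omega> :: "'w measure"
    and P :: "'a \<Rightarrow> 'w measure" and Z :: "real \<Rightarrow> 'w \<Rightarrow> 'a"
    and T\<^sub>0 :: real and I\<^sub>0 :: "'a \<Rightarrow> 'a \<Rightarrow> ereal"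
  assumes "markov_process E \<Omega> P Z"
    and "\<not> bounded E"
    and "T\<^sub>0 > 0"
    and "weak_LDP E \<Omega> P Z T\<^sub>0 I\<^sub>0"
  shows "\<exists>I :: real \<Rightarrow> 'a \<Rightarrow> 'a \<Rightarrow> ereal.
           (\<forall>T>0. weak_LDP E \<Omega> P Z T (I T)) \<and>
           (\<forall>\<theta>>0. \<forall>T>0. \<forall>q q'. I (\<theta> * T) (\<theta> *\<^sub>R q) (\<theta> *\<^sub>R q') = ereal \<theta> * I T q q') \<and>
           (\<forall>T>0. \<forall>T'>0. \<forall>q q' q''. I (T + T') q q'' \<le> I T q q' + I T' q' q'')"
proof -
  note mp = assms(1) and T0 = assms(3)
  define J where "J = (\<lambda>q q'. if unappr E q then \<infinity> else I\<^sub>0 q q')"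
  have WJ: "weak_LDP E \<Omega> P Z T\<^sub>0 J" unfolding J_def by (rule weak_LDP_mod[OF assms(4)])
  define I where "I = (\<lambda>T q q'. ereal (T / T\<^sub>0) * J ((T\<^sub>0 / T) *\<^sub>R q) ((T\<^sub>0 / T) *\<^sub>R q'))"
  have W: "weak_LDP E \<Omega> P Z T (I T)" if T: "T > 0" for T
  proof -
    have h: "weak_LDP E \<Omega> P Z (T / T\<^sub>0 * T\<^sub>0) (\<lambda>q q'. ereal (T / T\<^sub>0) * J ((1 / (T / T\<^sub>0)) *\<^sub>R q) ((1 / (T / T\<^sub>0)) *\<^sub>R q'))"
      using T T0 by (intro weak_LDP_scale[OF WJ]) simp
    have e1: "T / T\<^sub>0 * T\<^sub>0 = T" using T0 by simp
    have e2: "1 / (T / T\<^sub>0) = T\<^sub>0 / T" by simp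
    show ?thesis using h unfolding e1 e2 I_def .
  qed
  have S: "I (\<theta> * T) (\<theta> *\<^sub>R q) (\<theta> *\<^sub>R q') = ereal \<theta> * I T q q'" if th: "\<theta> > 0" and T: "T > 0" for \<theta> T q q'
  proof -
    have e1: "(T\<^sub>0 / (\<theta> * T)) *\<^sub>R (\<theta> *\<^sub>R x) = (T\<^sub>0 / T) *\<^sub>R x" for x :: 'a
      using th by simp
    have e2: "ereal (\<theta> * T / T\<^sub>0) = ereal \<theta> * ereal (T / T\<^sub>0)" by simp
    show ?thesis unfolding I_def e1 e2 by (rule mult.assoc)
  qed
  have A: "I (T + T') q q'' \<le> I T q q' + I T' q' q''" if T: "T > 0" and T': "T' > 0" for T T' q q' q''
  proof (cases "unappr E q")
    case True
    then have "unappr E ((T\<^sub>0 / T) *\<^sub>R q)" using T T0 by (subst unappr_scale_iff) auto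
    then have "I T q q' = \<infinity>" unfolding I_def J_def using T T0 by simp
    then show ?thesis by simp
  next
    case False
    show ?thesis by (rule subadd[OF mp T T' W[OF T] W[OF T'] W] ) (use T T' False in auto)
  qed
  show ?thesis
    by (rule exI[of _ I]) (use W S A in blast)
qed

end
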